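(* Let $\{G_i: i\in I\}$ be a family of (Hausdorff) topological groups and let $G=\prod_{i\in I}G_i$ be their product with the Tychonoff product topology. If $G$ is $g$-reversible, then every factor $G_i$ is $g$-reversible.
   Context: All topological groups are assumed Hausdorff. A topological group $G$ is called $g$-reversible if every continuous automorphism of $G$ (i.e. every continuous group isomorphism of $G$ onto itself) is an open map. *)

theory Defs
  imports "HOL-Analysis.Analysis" "HOL-Algebra.Product_Groups"
begin

definition topological_group :: "('a, 'b) monoid_scheme \<Rightarrow> 'a topology \<Rightarrow> bool" where
  "topological_group G T \<longleftrightarrow>
     group G \<and> topspace T = carrier G \<and> Hausdorff_space T \<and>
     continuous_map (prod_topology T T) T (\<lambda>(x, y). x \<otimes>\<^bsub>G\<^esub> y) \<and>
     continuous_map T T (\<lambda>x. inv\<^bsub>G\<^esub> x)"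

definition g_reversible :: "('a, 'b) monoid_scheme \<Rightarrow> 'a topology \<Rightarrow> bool" where
  "g_reversible G T \<longleftrightarrow>
     (\<forall>f. f \<in> iso G G \<and> continuous_map T T f \<longrightarrow> open_map T T f)"

end

theory Submission
  imports Defs
begin

theorem theorem9p1:
  fixes I :: "'i set"
    and G :: "'i \<Rightarrow> ('a, 'b) monoid_scheme"
    and T :: "'i \<Rightarrow> 'a topology"
  assumes "\<forall>i\<in>I. topological_group (G i) (T i)"
    and "g_reversible (product_group I G) (product_topology T I)"
  shows "\<forall>i\<in>I. g_reversible (G i) (T i)"
proof
  fix j assume j: "j \<in> I"
  have grp: "\<And>i. i \<in> I \<Longrightarrow> group (G i)" and top: "\<And>i. i \<in> I \<Longrightarrow> topspace (T i) = carrier (G i)"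
    using assms(1) unfolding topological_group_def by auto
  show "g_reversible (G j) (T j)"
    unfolding g_reversible_def
  proof (intro allI impI)
    fix f assume f: "f \<in> iso (G j) (G j) \<and> continuous_map (T j) (T j) f"
    have fhom: "f \<in> hom (G j) (G j)" and fbij: "bij_betw f (carrier (G j)) (carrier (G j))"
      using f unfolding iso_def by auto
    define g where "g = inv_into (carrier (G j)) f"
    have gbij: "bij_betw g (carrier (G j)) (carrier (G j))"
      unfolding g_def using fbij by (simp add: bij_betw_inv_into)
    have fg: "\<And>y. y \<in> carrier (G j) \<Longrightarrow> f (g y) = y"
      unfolding g_def using fbij by (meson bij_betw_inv_into_right)
    have gf: "\<And>y. y \<in> carrier (G j) \<Longrightarrow> g (f y) = y"
      unfolding g_def using fbij by (meson bij_betw_inv_into_left)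
    have fc: "\<And>y. y \<in> carrier (G j) \<Longrightarrow> f y \<in> carrier (G j)"
      using fbij bij_betwE by blast
    have gc: "\<And>y. y \<in> carrier (G j) \<Longrightarrow> g y \<in> carrier (G j)"
      using gbij bij_betwE by blast
    define F where "F = (\<lambda>x. \<lambda>i\<in>I. if i = j then f (x i) else x i)"
    define H where "H = (\<lambda>x. \<lambda>i\<in>I. if i = j then g (x i) else x i)"
    let ?P = "product_group I G"
    have Fc: "F x \<in> carrier ?P" if "x \<in> carrier ?P" for x
      using that fc j unfolding F_def by (auto simp: PiE_iff)
    have Hc: "H x \<in> carrier ?P" if "x \<in> carrier ?P" for x
      using that gc j unfolding H_def by (auto simp: PiE_iff)
    have FH: "F (H x) = x" if "x \<in> carrier ?P" for x
      using that fg j unfolding F_def H_def by (auto simp: PiE_iff extensional_def)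
    have HF: "H (F x) = x" if "x \<in> carrier ?P" for x
      using that gf j unfolding F_def H_def by (auto simp: PiE_iff extensional_def)
    have Fbij: "bij_betw F (carrier ?P) (carrier ?P)"
      by (rule bij_betw_byWitness[where f'=H]) (use Fc Hc FH HF in \<open>auto simp del: carrier_product_group\<close>)
    have Fhom: "F \<in> hom ?P ?P"
    proof (rule homI)
      show "F x \<in> carrier ?P" if "x \<in> carrier ?P" for x using Fc that .
      show "F (x \<otimes>\<^bsub>?P\<^esub> y) = F x \<otimes>\<^bsub>?P\<^esub> F y" if "x \<in> carrier ?P" "y \<in> carrier ?P" for x y
        using that j fhom unfolding F_def by (auto simp: hom_mult PiE_iff)
    qed
    have Fiso: "F \<in> iso ?P ?P" using Fhom Fbij by (simp add: iso_def)
    have fcont: "continuous_map (T j) (T j) f" using f by auto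
    have Fcont: "continuous_map (product_topology T I) (product_topology T I) F"
      unfolding continuous_map_componentwise
    proof (intro conjI ballI)
      show "F ` topspace (product_topology T I) \<subseteq> extensional I"
        unfolding F_def by auto
      fix k assume k: "k \<in> I"
      show "continuous_map (product_topology T I) (T k) (\<lambda>x. F x k)"
      proof (cases "k = j")
        case True
        have "continuous_map (product_topology T I) (T k) (f \<circ> (\<lambda>x. x j))"
          using True continuous_map_compose[OF continuous_map_product_projection[OF j, of T] fcont] by simp
        then show ?thesis using True k unfolding F_def by (simp add: o_def)
      next
        case False
        then show ?thesis using k continuous_map_product_projection[OF k] unfolding F_def by simp
      qed
    qed
    have Fopen: "open_map (product_topology T I) (product_topology T I) F"
      using assms(2) Fiso Fcont unfolding g_reversible_def by blast
    show "open_map (T j) (T j) f"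
      unfolding open_map_def
    proof (intro allI impI)
      fix U assume U: "openin (T j) U"
      have Usub: "U \<subseteq> carrier (G j)" using openin_subset[OF U] top[OF j] by simp
      define V where "V = {x \<in> topspace (product_topology T I). x j \<in> U}"
      have "openin (product_topology T I) V"
        unfolding V_def by (rule openin_continuous_map_preimage[OF continuous_map_product_projection[OF j, of T] U])
      then have "openin (product_topology T I) (F ` V)" using Fopen by (simp add: open_map_def)
      then have op: "openin (T j) ((\<lambda>x. x j) ` (F ` V))"
        using open_map_product_projection[OF j, of T] by (simp add: open_map_def)
      have "(\<lambda>x. x j) ` (F ` V) = f ` U"
      proof
        show "(\<lambda>x. x j) ` (F ` V) \<subseteq> f ` U"
          unfolding V_def F_def using j by auto
        show "f ` U \<subseteq> (\<lambda>x. x j) ` (F ` V)"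
        proof
          fix z assume "z \<in> f ` U"
          then obtain u where u: "u \<in> U" "z = f u" by auto
          define x where "x = (\<lambda>i\<in>I. if i = j then u else \<one>\<^bsub>G i\<^esub>)"
          have "x \<in> V" unfolding V_def x_def using u Usub j top grp
            by (auto simp: PiE_iff group.is_monoid monoid.one_closed)
          moreover have "F x j = z" unfolding F_def x_def using j u by simp
          ultimately show "z \<in> (\<lambda>x. x j) ` (F ` V)" by force
        qed
      qed
      then show "openin (T j) (f ` U)" using op by simp
    qed
  qed
qed

end
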